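(* Let $(\mathscr{N},K)$ be a PL-RDK system whose underlying network $\mathscr{N}$ has deficiency zero and which has a positive equilibrium. If a pair of reactions in one linkage class of $\mathscr{N}$ forms an SF-pair in a species $X$, then the system has absolute concentration robustness in $X$.
   Context: A CRN $\mathscr{N}=(\mathscr{S},\mathscr{C},\mathscr{R})$ has species $\mathscr{S}$, complexes $\mathscr{C}\subset\mathbb{R}^{\mathscr{S}}_{\ge0}$ and reactions $\mathscr{R}\subset\mathscr{C}\times\mathscr{C}$ (no reaction $y\to y$). Linkage classes are the connected components of the digraph $(\mathscr{C},\mathscr{R})$. The deficiency is $\delta=n-\ell-s$ with $n$ the number of complexes, $\ell$ the number of linkage classes and $s=\dim\mathrm{span}\{y'-y:y\to y'\in\mathscr{R}\}$. A power law kinetics has rate functions $K_j(x)=k_j\prod_X x_X^{F_{jX}}$ for $x\in\mathbb{R}^{\mathscr{S}}_{>0}$, with $k_j>0$ and $F$ a real kinetic order matrix whose row $F_{j,\cdot}$ is the kinetic order vector of reaction $R_j$; it is PL-RDK if reactions with the same reactant complex have identical kinetic order vectors. An SF-pair in $X$ is a pair of reactions whose kinetic order vectors differ only in the $X$-coordinate. A positive equilibrium is $c\in\mathbb{R}^{\mathscr{S}}_{>0}$ with $\sum_{y\to y'}K_{y\to y'}(c)(y'-y)=0$. ACR in $X$: a positive equilibrium exists and all positive equilibria have the same $X$-coordinate. *)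

theory Defs
  imports "HOL-Analysis.Analysis"
begin

text \<open>Species are indexed by a finite type 's; complexes are vectors in real^'s.
A reaction y \<rightarrow> y' is the pair (y, y').\<close>

type_synonym 's cplx = "real ^ 's"
type_synonym 's reaction = "'s cplx \<times> 's cplx"

definition CRN :: "'s::finite cplx set \<Rightarrow> 's reaction set \<Rightarrow> bool" where
  "CRN C R \<longleftrightarrow> finite C \<and> finite R \<and> R \<subseteq> C \<times> C
     \<and> (\<forall>y\<in>C. \<forall>X. 0 \<le> y $ X) \<and> (\<forall>r\<in>R. fst r \<noteq> snd r)"

definition linked :: "'s::finite reaction set \<Rightarrow> 's cplx \<Rightarrow> 's cplx \<Rightarrow> bool" where
  "linked R a b \<longleftrightarrow> (a, b) \<in> (R \<union> converse R)\<^sup>*"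

definition linkage_classes :: "'s::finite cplx set \<Rightarrow> 's reaction set \<Rightarrow> 's cplx set set" where
  "linkage_classes C R = C // {(a, b). a \<in> C \<and> b \<in> C \<and> linked R a b}"

definition stoich_rank :: "'s::finite reaction set \<Rightarrow> nat" where
  "stoich_rank R = dim (span {snd r - fst r | r. r \<in> R})"

definition deficiency :: "'s::finite cplx set \<Rightarrow> 's reaction set \<Rightarrow> int" where
  "deficiency C R = int (card C) - int (card (linkage_classes C R)) - int (stoich_rank R)"

text \<open>Power law kinetics: rate constants k and kinetic order vectors F (rows of the
kinetic order matrix), indexed by reactions.\<close>
definition PL_kinetics :: "'s::finite reaction set \<Rightarrow> ('s reaction \<Rightarrow> real) \<Rightarrow> bool" where
  "PL_kinetics R k \<longleftrightarrow> (\<forall>r\<in>R. 0 < k r)"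

definition rate :: "('s::finite reaction \<Rightarrow> real) \<Rightarrow> ('s reaction \<Rightarrow> real ^ 's)
     \<Rightarrow> 's reaction \<Rightarrow> real ^ 's \<Rightarrow> real" where
  "rate k F r x = k r * (\<Prod>X\<in>UNIV. (x $ X) powr (F r $ X))"

definition PL_RDK :: "'s::finite reaction set \<Rightarrow> ('s reaction \<Rightarrow> real ^ 's) \<Rightarrow> bool" where
  "PL_RDK R F \<longleftrightarrow> (\<forall>r1\<in>R. \<forall>r2\<in>R. fst r1 = fst r2 \<longrightarrow> F r1 = F r2)"

definition SF_pair :: "('s::finite reaction \<Rightarrow> real ^ 's) \<Rightarrow> 's reaction \<Rightarrow> 's reaction \<Rightarrow> 's \<Rightarrow> bool" where
  "SF_pair F r1 r2 X \<longleftrightarrow> F r1 $ X \<noteq> F r2 $ X \<and> (\<forall>Y. Y \<noteq> X \<longrightarrow> F r1 $ Y = F r2 $ Y)"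

definition pos_equilibrium :: "'s::finite reaction set \<Rightarrow> ('s reaction \<Rightarrow> real)
     \<Rightarrow> ('s reaction \<Rightarrow> real ^ 's) \<Rightarrow> real ^ 's \<Rightarrow> bool" where
  "pos_equilibrium R k F c \<longleftrightarrow> (\<forall>X. 0 < c $ X)
     \<and> (\<Sum>r\<in>R. rate k F r c *\<^sub>R (snd r - fst r)) = 0"

definition ACR :: "'s::finite reaction set \<Rightarrow> ('s reaction \<Rightarrow> real)
     \<Rightarrow> ('s reaction \<Rightarrow> real ^ 's) \<Rightarrow> 's \<Rightarrow> bool" where
  "ACR R k F X \<longleftrightarrow> (\<exists>c. pos_equilibrium R k F c)
     \<and> (\<forall>c1 c2. pos_equilibrium R k F c1 \<longrightarrow> pos_equilibrium R k F c2 \<longrightarrow> c1 $ X = c2 $ X)"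

end

theory Submission
  imports Defs
begin

lemma sum_ind_swap:
  fixes g :: "'r \<Rightarrow> real" and f :: "'c \<Rightarrow> real"
  assumes "finite C" "finite R" "\<forall>r\<in>R. p r \<in> C"
  shows "(\<Sum>r\<in>R. g r * f (p r)) = (\<Sum>z\<in>C. f z * (\<Sum>r\<in>R. g r * (if p r = z then 1 else 0)))"
proof -
  have "(\<Sum>z\<in>C. f z * (\<Sum>r\<in>R. g r * (if p r = z then 1 else 0)))
      = (\<Sum>z\<in>C. \<Sum>r\<in>R. (if p r = z then g r * f z else 0))"
    by (simp add: sum_distrib_left mult.commute if_distrib cong: if_cong)
  also have "\<dots> = (\<Sum>r\<in>R. \<Sum>z\<in>C. (if p r = z then g r * f z else 0))"
    by (rule sum.swap)
  also have "\<dots> = (\<Sum>r\<in>R. g r * f (p r))"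
    using assms by (auto intro!: sum.cong simp: sum.delta)
  finally show ?thesis by simp
qed

lemma linked_sym:
  assumes "linked R a b" shows "linked R b a"
proof -
  have "(b, a) \<in> ((R \<union> R\<inverse>)\<^sup>*)\<inverse>" using assms by (simp add: linked_def)
  then have "(b, a) \<in> ((R \<union> R\<inverse>)\<inverse>)\<^sup>*" by (simp add: rtrancl_converse)
  moreover have "(R \<union> R\<inverse>)\<inverse> = R \<union> R\<inverse>" by auto
  ultimately show ?thesis by (simp add: linked_def)
qed

lemma linked_trans:
  assumes "linked R a b" "linked R b c" shows "linked R a c"
  using assms unfolding linked_def by (meson rtrancl_trans)

lemma linked_span:
  assumes "linked R a b"
  shows "b - a \<in> span {snd r - fst r | r. r \<in> R}"
proof -
  have "(a, b) \<in> (R \<union> R\<inverse>)\<^sup>*" using assms by (simp add: linked_def)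
  then show ?thesis
  proof (induction rule: rtrancl_induct)
    case base
    then show ?case by (simp add: span_zero)
  next
    case (step y z)
    show ?case
    proof (cases "(y, z) \<in> R")
      case True
      then have "z - y \<in> span {snd r - fst r | r. r \<in> R}"
        by (intro span_base) force
      then have "(z - y) + (y - a) \<in> span {snd r - fst r | r. r \<in> R}"
        using step.IH by (rule span_add)
      then show ?thesis by simp
    next
      case False
      then have "(z, y) \<in> R" using step.hyps by auto
      then have "y - z \<in> span {snd r - fst r | r. r \<in> R}"
        by (intro span_base) force
      then have "(y - a) - (y - z) \<in> span {snd r - fst r | r. r \<in> R}"
        using step.IH span_diff by blast
      then show ?thesis by simp
    qed
  qed
qed

lemma def0_balance:
  fixes C :: "'s::finite cplx set" and R :: "'s reaction set" and a :: "'s reaction \<Rightarrow> real"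
  assumes crn: "CRN C R" and def0: "deficiency C R = 0"
    and eq: "(\<Sum>r\<in>R. a r *\<^sub>R (snd r - fst r)) = 0"
  shows "\<forall>z\<in>C. (\<Sum>r\<in>R. a r * ((if snd r = z then 1 else 0) - (if fst r = z then 1 else 0))) = 0"
proof -
  have finC: "finite C" and finR: "finite R" and RC: "R \<subseteq> C \<times> C"
    using crn by (auto simp: CRN_def)
  define rel where "rel = {(a, b). a \<in> C \<and> b \<in> C \<and> linked R a b}"
  have eqv: "equiv C rel"
  proof (rule equivI)
    show "refl_on C rel" unfolding refl_on_def rel_def linked_def by auto
    show "sym rel" unfolding sym_def rel_def using linked_sym by blast
    show "trans rel" unfolding trans_def rel_def using linked_trans by blast
    show "rel \<subseteq> C \<times> C" unfolding rel_def by auto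
  qed
  define pick :: "'s cplx set \<Rightarrow> 's cplx" where "pick Q = (SOME z. z \<in> Q)" for Q
  define rep where "rep y = pick (rel `` {y})" for y
  define reps where "reps = pick ` (C // rel)"
  define v where "v y = (\<Sum>r\<in>R. a r * ((if snd r = y then 1 else 0) - (if fst r = y then 1 else 0)))" for y
  have pickQ: "pick Q \<in> Q" if "Q \<in> C // rel" for Q
    using in_quotient_imp_non_empty[OF eqv that] unfolding pick_def by (simp add: some_in_eq)
  have injp: "inj_on pick (C // rel)"
  proof (rule inj_onI)
    fix Q1 Q2 assume q: "Q1 \<in> C // rel" "Q2 \<in> C // rel" "pick Q1 = pick Q2"
    have "pick Q1 \<in> Q1" using pickQ[OF q(1)] .
    moreover have "pick Q1 \<in> Q2" using pickQ[OF q(2)] q(3) by simp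
    ultimately have "pick Q1 \<in> Q1 \<inter> Q2" by blast
    then show "Q1 = Q2" using quotient_disj[OF eqv \<open>Q1 \<in> C // rel\<close> \<open>Q2 \<in> C // rel\<close>] by blast
  qed
  have card_reps: "card reps = card (linkage_classes C R)"
  proof -
    have "card reps = card (C // rel)" unfolding reps_def using injp by (rule card_image)
    then show ?thesis unfolding linkage_classes_def rel_def by simp
  qed
  have repC: "rep y \<in> C" "(y, rep y) \<in> rel" "rep y \<in> reps" if "y \<in> C" for y
  proof -
    have Q: "rel `` {y} \<in> C // rel" using that by (rule quotientI)
    show "(y, rep y) \<in> rel" using pickQ[OF Q] unfolding rep_def by simp
    then show "rep y \<in> C" unfolding rel_def by simp
    show "rep y \<in> reps" using Q unfolding reps_def rep_def by blast
  qed
  have rep_eq: "rep y = rep y'" if "y \<in> C" "y' \<in> C" "linked R y y'" for y y'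
  proof -
    have "(y, y') \<in> rel" using that rel_def by simp
    then show ?thesis unfolding rep_def using equiv_class_eq[OF eqv] by simp
  qed
  have rep_reps: "rep z = z" if zr: "z \<in> reps" for z
  proof -
    obtain Q where Q: "Q \<in> C // rel" "z = pick Q" using zr unfolding reps_def by blast
    obtain x where x: "x \<in> C" "Q = rel `` {x}" using Q(1) by (rule quotientE)
    have "(x, z) \<in> rel" using pickQ[OF Q(1)] Q(2) x(2) by simp
    then have "rel `` {x} = rel `` {z}" using equiv_class_eq[OF eqv] by simp
    then show ?thesis unfolding rep_def using Q x by simp
  qed
  have repsC: "reps \<subseteq> C"
  proof
    fix z assume zr: "z \<in> reps"
    obtain Q where Q: "Q \<in> C // rel" "z = pick Q" using zr unfolding reps_def by blast
    then show "z \<in> C" using pickQ[OF Q(1)] in_quotient_imp_subset[OF eqv Q(1)] by blast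
  qed
  define S where "S = span {snd r - fst r | r. r \<in> R}"
  define e where "e y = y - rep y" for y
  define E where "E = e ` (C - reps)"
  have eS: "e y \<in> S" if "y \<in> C" for y
  proof -
    have "linked R y (rep y)" using repC(2)[OF that] rel_def by simp
    then have "rep y - y \<in> S" unfolding S_def by (rule linked_span)
    then have "- (rep y - y) \<in> S" unfolding S_def by (rule span_neg)
    then show ?thesis by (simp add: e_def)
  qed
  have ES: "E \<subseteq> S" using eS E_def by auto
  have e_reps: "e z = 0" if "z \<in> reps" for z using rep_reps[OF that] by (simp add: e_def)
  have espan: "e y \<in> span E" if "y \<in> C" for y
  proof (cases "y \<in> reps")
    case True then show ?thesis using e_reps by (simp add: span_zero)
  next
    case False then show ?thesis using that E_def by (intro span_base) auto
  qed
  have reac: "snd r - fst r = e (snd r) - e (fst r)" if "r \<in> R" for r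
  proof -
    have "linked R (fst r) (snd r)" using that unfolding linked_def
      by (intro r_into_rtrancl) (auto intro: rev_image_eqI)
    then have "rep (fst r) = rep (snd r)" using rep_eq that RC by auto
    then show ?thesis by (simp add: e_def)
  qed
  have SE: "S \<subseteq> span E"
    unfolding S_def
  proof (rule span_minimal)
    show "{snd r - fst r |r. r \<in> R} \<subseteq> span E"
    proof
      fix x assume "x \<in> {snd r - fst r |r. r \<in> R}"
      then obtain r where r: "r \<in> R" "x = snd r - fst r" by blast
      then have "fst r \<in> C" "snd r \<in> C" using RC by auto
      then show "x \<in> span E" using reac[OF r(1)] r(2) espan span_diff by metis
    qed
  qed (rule subspace_span)
  have spanE: "span E = S"
    using SE span_minimal[OF ES] S_def subspace_span by blast
  have finE: "finite E" using finC E_def by simp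
  have dimS: "dim S = card (C - reps)"
  proof -
    have "card reps \<le> card C" using repsC finC by (simp add: card_mono)
    moreover have "card (C - reps) = card C - card reps"
      using repsC finC by (meson card_Diff_subset finite_subset)
    ultimately show ?thesis using def0 card_reps
      unfolding deficiency_def stoich_rank_def S_def by simp
  qed
  have cardE: "card E \<le> dim S" using dimS E_def card_image_le[of "C - reps" e] finC by simp
  have indE: "independent E"
    using eucl.card_le_dim_spanning[OF ES SE finE cardE] .
  have "card E = card (C - reps)"
    using dim_span_eq_card_independent[OF indE] spanE dimS by simp
  then have inje: "inj_on e (C - reps)"
    using E_def finC by (intro eq_card_imp_inj_on) auto
  have expand: "(\<Sum>r\<in>R. a r *\<^sub>R (snd r - fst r)) = (\<Sum>y\<in>C. v y *\<^sub>R e y)"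
  proof -
    have "(\<Sum>y\<in>C. v y *\<^sub>R e y) = (\<Sum>y\<in>C. \<Sum>r\<in>R. (a r * ((if snd r = y then 1 else 0) - (if fst r = y then 1 else 0))) *\<^sub>R e y)"
      unfolding v_def by (simp add: scaleR_sum_left)
    also have "\<dots> = (\<Sum>r\<in>R. \<Sum>y\<in>C. (a r * ((if snd r = y then 1 else 0) - (if fst r = y then 1 else 0))) *\<^sub>R e y)"
      by (rule sum.swap)
    also have "\<dots> = (\<Sum>r\<in>R. a r *\<^sub>R (e (snd r) - e (fst r)))"
    proof (rule sum.cong[OF refl])
      fix r assume r: "r \<in> R"
      then have in2: "fst r \<in> C" "snd r \<in> C" using RC by auto
      have "(\<Sum>y\<in>C. (a r * ((if snd r = y then 1 else 0) - (if fst r = y then 1 else 0))) *\<^sub>R e y)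
          = (\<Sum>y\<in>C. (if snd r = y then a r *\<^sub>R e y else 0) - (if fst r = y then a r *\<^sub>R e y else 0))"
        by (intro sum.cong) (auto simp: algebra_simps)
      also have "\<dots> = a r *\<^sub>R e (snd r) - a r *\<^sub>R e (fst r)"
        using finC in2 by (simp add: sum_subtractf)
      finally show "(\<Sum>y\<in>C. (a r * ((if snd r = y then 1 else 0) - (if fst r = y then 1 else 0))) *\<^sub>R e y)
          = a r *\<^sub>R (e (snd r) - e (fst r))" by (simp add: algebra_simps)
    qed
    also have "\<dots> = (\<Sum>r\<in>R. a r *\<^sub>R (snd r - fst r))"
      using reac by (intro sum.cong) auto
    finally show ?thesis by simp
  qed
  have "(\<Sum>y\<in>C. v y *\<^sub>R e y) = (\<Sum>y\<in>C - reps. v y *\<^sub>R e y)"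
    using finC e_reps by (intro sum.mono_neutral_right) auto
  also have "\<dots> = (\<Sum>w\<in>E. v (inv_into (C - reps) e w) *\<^sub>R w)"
    unfolding E_def using sum.reindex[OF inje, of "\<lambda>w. v (inv_into (C - reps) e w) *\<^sub>R w"] inje
    by (simp add: inv_into_f_f)
  finally have zero: "(\<Sum>w\<in>E. v (inv_into (C - reps) e w) *\<^sub>R w) = 0"
    using eq expand by simp
  have v0: "v y = 0" if "y \<in> C - reps" for y
  proof (rule ccontr)
    assume "v y \<noteq> 0"
    then have "v (inv_into (C - reps) e (e y)) \<noteq> 0" using inv_into_f_f[OF inje that] by simp
    moreover have "e y \<in> E" using that E_def by simp
    ultimately have "\<exists>w\<in>E. v (inv_into (C - reps) e w) \<noteq> 0" by blast
    then have "\<exists>u. (\<exists>w\<in>E. u w \<noteq> 0) \<and> (\<Sum>w\<in>E. u w *\<^sub>R w) = 0"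
      using zero by (intro exI[of _ "\<lambda>w. v (inv_into (C - reps) e w)"]) simp
    then have "dependent E" using dependent_finite[OF finE] by simp
    then show False using indE by simp
  qed
  have v1: "v z = 0" if z: "z \<in> reps" for z
  proof -
    define Q where "Q = {y \<in> C. rep y = z}"
    have finQ: "finite Q" using finC Q_def by simp
    have zQ: "z \<in> Q" using z repsC rep_reps Q_def by auto
    have iff: "snd r \<in> Q \<longleftrightarrow> fst r \<in> Q" if "r \<in> R" for r
    proof -
      have "linked R (fst r) (snd r)" using that unfolding linked_def
        by (intro r_into_rtrancl) (auto intro: rev_image_eqI)
      then have "rep (fst r) = rep (snd r)" using rep_eq that RC by auto
      then show ?thesis using that RC Q_def by auto
    qed
    have "(\<Sum>y\<in>Q. v y) = (\<Sum>r\<in>R. \<Sum>y\<in>Q. a r * ((if snd r = y then 1 else 0) - (if fst r = y then 1 else 0)))"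
      unfolding v_def by (rule sum.swap)
    also have "\<dots> = (\<Sum>r\<in>R. 0)"
    proof (rule sum.cong[OF refl])
      fix r assume r: "r \<in> R"
      have "(\<Sum>y\<in>Q. a r * ((if snd r = y then 1 else 0) - (if fst r = y then 1 else 0)))
          = (\<Sum>y\<in>Q. (if snd r = y then a r else 0) - (if fst r = y then a r else 0))"
        by (intro sum.cong) auto
      also have "\<dots> = 0" using finQ iff[OF r] by (simp add: sum_subtractf)
      finally show "(\<Sum>y\<in>Q. a r * ((if snd r = y then 1 else 0) - (if fst r = y then 1 else 0))) = 0" .
    qed
    finally have s0: "(\<Sum>y\<in>Q. v y) = 0" by simp
    have "(\<Sum>y\<in>Q. v y) = v z + (\<Sum>y\<in>Q - {z}. v y)"
      using finQ zQ by (simp add: sum.remove)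
    moreover have "(\<Sum>y\<in>Q - {z}. v y) = 0"
    proof (rule sum.neutral, rule ballI)
      fix y assume y: "y \<in> Q - {z}"
      then have "y \<notin> reps" using rep_reps Q_def by auto
      then show "v y = 0" using v0 y Q_def by auto
    qed
    ultimately show ?thesis using s0 by simp
  qed
  show ?thesis using v0 v1 v_def by auto
qed

lemma rate_exp:
  assumes "\<forall>Y. 0 < x $ Y"
  shows "rate k F r x = k r * exp (\<Sum>Y\<in>UNIV. F r $ Y * ln (x $ Y))"
proof -
  have "(\<Prod>Y\<in>UNIV. (x $ Y) powr (F r $ Y)) = (\<Prod>Y\<in>UNIV. exp (F r $ Y * ln (x $ Y)))"
  proof (intro prod.cong refl)
    fix Y
    have "x $ Y \<noteq> 0" using assms by (metis less_irrefl)
    then show "(x $ Y) powr (F r $ Y) = exp (F r $ Y * ln (x $ Y))" by (simp add: powr_def)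
  qed
  also have "\<dots> = exp (\<Sum>Y\<in>UNIV. F r $ Y * ln (x $ Y))"
    by (simp add: exp_sum)
  finally show ?thesis by (simp add: rate_def)
qed

lemma balance_split:
  assumes "(\<Sum>r\<in>R. a r * ((if snd r = z then 1 else 0) - (if fst r = z then 1 else 0))) = (0::real)"
  shows "(\<Sum>r\<in>R. a r * (if snd r = z then 1 else 0)) = (\<Sum>r\<in>R. a r * (if fst r = z then 1 else 0))"
  using assms by (simp add: right_diff_distrib sum_subtractf)

theorem mainTheorem6:
  fixes C :: "'s::finite cplx set" and R :: "'s reaction set"
    and k :: "'s reaction \<Rightarrow> real" and F :: "'s reaction \<Rightarrow> real ^ 's"
    and r1 r2 :: "'s reaction" and X :: 's
  assumes "CRN C R"
    and "PL_kinetics R k"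
    and "PL_RDK R F"
    and "deficiency C R = 0"
    and "\<exists>c. pos_equilibrium R k F c"
    and "r1 \<in> R" and "r2 \<in> R"
    and "linked R (fst r1) (fst r2)"
    and "SF_pair F r1 r2 X"
  shows "ACR R k F X"
proof -
  note crn = assms(1) and def0 = assms(4)
  have finC: "finite C" and finR: "finite R" and RC: "R \<subseteq> C \<times> C"
    using crn by (auto simp: CRN_def)
  have RC': "\<forall>r\<in>R. fst r \<in> C" "\<forall>r\<in>R. snd r \<in> C" using RC by auto
  have kpos: "\<And>r. r \<in> R \<Longrightarrow> 0 < k r" using assms(2) by (simp add: PL_kinetics_def)
  define G where "G z = F (SOME r. r \<in> R \<and> fst r = z)" for z
  have hG: "F r = G (fst r)" if "r \<in> R" for r
  proof -
    have "\<exists>r'. r' \<in> R \<and> fst r' = fst r" using that by blast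
    then have "(SOME r'. r' \<in> R \<and> fst r' = fst r) \<in> R \<and> fst (SOME r'. r' \<in> R \<and> fst r' = fst r) = fst r"
      by (rule someI_ex)
    then have "F (SOME r'. r' \<in> R \<and> fst r' = fst r) = F r"
      using assms(3) that unfolding PL_RDK_def by blast
    then show ?thesis unfolding G_def by simp
  qed
  define lin where "lin f x = (\<Sum>Y\<in>UNIV. f $ Y * ln (x $ Y))" for f :: "real ^ 's" and x :: "real ^ 's"
  have main: "c1 $ X = c2 $ X" if e1: "pos_equilibrium R k F c1" and e2: "pos_equilibrium R k F c2" for c1 c2
  proof -
    have p1: "\<forall>Y. 0 < c1 $ Y" and p2: "\<forall>Y. 0 < c2 $ Y"
      using e1 e2 by (auto simp: pos_equilibrium_def)
    define w where "w r = k r * exp (lin (G (fst r)) c1)" for r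
    define u where "u z = exp (lin (G z) c2 - lin (G z) c1)" for z
    have wpos: "0 < w r" if "r \<in> R" for r using kpos[OF that] by (simp add: w_def)
    have rate1: "rate k F r c1 = w r" if "r \<in> R" for r
      using rate_exp[OF p1] hG[OF that] by (simp add: w_def lin_def)
    have rate2: "rate k F r c2 = w r * u (fst r)" if "r \<in> R" for r
      using rate_exp[OF p2] hG[OF that] by (simp add: w_def u_def lin_def exp_diff)
    have bal1: "(\<Sum>r\<in>R. w r * (if snd r = z then 1 else 0)) = (\<Sum>r\<in>R. w r * (if fst r = z then 1 else 0))"
      if z: "z \<in> C" for z
    proof -
      have eqc: "(\<Sum>r\<in>R. rate k F r c1 *\<^sub>R (snd r - fst r)) = 0" using e1 by (simp add: pos_equilibrium_def)
      have "(\<Sum>r\<in>R. rate k F r c1 * ((if snd r = z then 1 else 0) - (if fst r = z then 1 else 0))) = 0"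
        using def0_balance[OF crn def0 eqc] z by blast
      then have "(\<Sum>r\<in>R. rate k F r c1 * (if snd r = z then 1 else 0)) = (\<Sum>r\<in>R. rate k F r c1 * (if fst r = z then 1 else 0))"
        by (rule balance_split)
      then show ?thesis using rate1 by (simp cong: sum.cong)
    qed
    have bal2: "(\<Sum>r\<in>R. (w r * u (fst r)) * (if snd r = z then 1 else 0)) = u z * (\<Sum>r\<in>R. w r * (if fst r = z then 1 else 0))"
      if z: "z \<in> C" for z
    proof -
      have eqc: "(\<Sum>r\<in>R. rate k F r c2 *\<^sub>R (snd r - fst r)) = 0" using e2 by (simp add: pos_equilibrium_def)
      have "(\<Sum>r\<in>R. rate k F r c2 * ((if snd r = z then 1 else 0) - (if fst r = z then 1 else 0))) = 0"
        using def0_balance[OF crn def0 eqc] z by blast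
      then have "(\<Sum>r\<in>R. rate k F r c2 * (if snd r = z then 1 else 0)) = (\<Sum>r\<in>R. rate k F r c2 * (if fst r = z then 1 else 0))"
        by (rule balance_split)
      then have "(\<Sum>r\<in>R. (w r * u (fst r)) * (if snd r = z then 1 else 0)) = (\<Sum>r\<in>R. (w r * u (fst r)) * (if fst r = z then 1 else 0))"
        using rate2 by (simp cong: sum.cong)
      also have "\<dots> = (\<Sum>r\<in>R. u z * (w r * (if fst r = z then 1 else 0)))"
        by (intro sum.cong) auto
      also have "\<dots> = u z * (\<Sum>r\<in>R. w r * (if fst r = z then 1 else 0))"
        by (simp add: sum_distrib_left)
      finally show ?thesis .
    qed
    have circ: "(\<Sum>r\<in>R. w r * f (snd r)) = (\<Sum>r\<in>R. w r * f (fst r))" for f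
    proof -
      have "(\<Sum>r\<in>R. w r * f (snd r)) = (\<Sum>z\<in>C. f z * (\<Sum>r\<in>R. w r * (if snd r = z then 1 else 0)))"
        using sum_ind_swap[OF finC finR RC'(2)] .
      also have "\<dots> = (\<Sum>z\<in>C. f z * (\<Sum>r\<in>R. w r * (if fst r = z then 1 else 0)))"
        using bal1 by (intro sum.cong) auto
      also have "\<dots> = (\<Sum>r\<in>R. w r * f (fst r))"
        using sum_ind_swap[OF finC finR RC'(1)] by simp
      finally show ?thesis .
    qed
    have cross: "(\<Sum>r\<in>R. (w r * u (fst r)) * u (snd r)) = (\<Sum>r\<in>R. w r * (u (fst r) * u (fst r)))"
    proof -
      have "(\<Sum>r\<in>R. (w r * u (fst r)) * u (snd r)) = (\<Sum>z\<in>C. u z * (\<Sum>r\<in>R. (w r * u (fst r)) * (if snd r = z then 1 else 0)))"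
        using sum_ind_swap[OF finC finR RC'(2)] .
      also have "\<dots> = (\<Sum>z\<in>C. (u z * u z) * (\<Sum>r\<in>R. w r * (if fst r = z then 1 else 0)))"
        using bal2 by (intro sum.cong) auto
      also have "\<dots> = (\<Sum>r\<in>R. w r * (u (fst r) * u (fst r)))"
        using sum_ind_swap[OF finC finR RC'(1), of w "\<lambda>z. u z * u z"] by simp
      finally show ?thesis .
    qed
    have expand: "w r * (u (fst r) - u (snd r))^2
        = w r * (u (fst r) * u (fst r)) - 2 * ((w r * u (fst r)) * u (snd r)) + w r * (u (snd r) * u (snd r))" for r
      by (simp add: power2_eq_square algebra_simps)
    have "(\<Sum>r\<in>R. w r * (u (fst r) - u (snd r))^2)
        = (\<Sum>r\<in>R. w r * (u (fst r) * u (fst r))) - 2 * (\<Sum>r\<in>R. (w r * u (fst r)) * u (snd r))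
          + (\<Sum>r\<in>R. w r * (u (snd r) * u (snd r)))"
      unfolding expand by (simp add: sum.distrib sum_subtractf sum_distrib_left)
    also have "\<dots> = 0"
      using cross circ[of "\<lambda>z. u z * u z"] by simp
    finally have sum0: "(\<Sum>r\<in>R. w r * (u (fst r) - u (snd r))^2) = 0" .
    have ueq: "u (fst r) = u (snd r)" if r: "r \<in> R" for r
    proof -
      have "\<forall>r\<in>R. w r * (u (fst r) - u (snd r))^2 = 0"
      proof -
        have "\<And>r. r \<in> R \<Longrightarrow> 0 \<le> w r * (u (fst r) - u (snd r))^2"
          using wpos by (simp add: less_imp_le)
        then have "(\<Sum>r\<in>R. w r * (u (fst r) - u (snd r))^2) = 0 \<longleftrightarrow> (\<forall>r\<in>R. w r * (u (fst r) - u (snd r))^2 = 0)"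
          by (rule sum_nonneg_eq_0_iff[OF finR])
        then show ?thesis using sum0 by simp
      qed
      then have "w r * (u (fst r) - u (snd r))^2 = 0" using r by blast
      moreover have "w r \<noteq> 0" using wpos[OF r] by simp
      ultimately have "(u (fst r) - u (snd r))^2 = 0" by simp
      then show ?thesis by simp
    qed
    have ulink: "u a = u b" if "(a, b) \<in> (R \<union> R\<inverse>)\<^sup>*" for a b
      using that
    proof (induction rule: rtrancl_induct)
      case base then show ?case by simp
    next
      case (step y z)
      then have "(y, z) \<in> R \<or> (z, y) \<in> R" by auto
      then have "u y = u z" using ueq by (metis fst_conv snd_conv)
      then show ?case using step.IH by simp
    qed
    have "u (fst r1) = u (fst r2)" using ulink assms(8) by (simp add: linked_def)
    then have "lin (F r1) c2 - lin (F r1) c1 = lin (F r2) c2 - lin (F r2) c1"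
      using hG[OF assms(6)] hG[OF assms(7)] by (simp add: u_def)
    moreover have "(lin (F r1) c2 - lin (F r1) c1) - (lin (F r2) c2 - lin (F r2) c1)
        = (\<Sum>Y\<in>UNIV. (F r1 $ Y - F r2 $ Y) * (ln (c2 $ Y) - ln (c1 $ Y)))"
      unfolding lin_def by (simp add: sum_subtractf[symmetric] algebra_simps)
    moreover have "(\<Sum>Y\<in>UNIV. (F r1 $ Y - F r2 $ Y) * (ln (c2 $ Y) - ln (c1 $ Y)))
        = (\<Sum>Y\<in>UNIV. if Y = X then (F r1 $ X - F r2 $ X) * (ln (c2 $ X) - ln (c1 $ X)) else 0)"
      using assms(9) unfolding SF_pair_def by (intro sum.cong) auto
    ultimately have "(F r1 $ X - F r2 $ X) * (ln (c2 $ X) - ln (c1 $ X)) = 0" by simp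
    then have "ln (c2 $ X) = ln (c1 $ X)" using assms(9) unfolding SF_pair_def by simp
    then show ?thesis using p1 p2 by simp
  qed
  show ?thesis unfolding ACR_def using assms(5) main by blast
qed

end
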